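(* Let $\mu$ be a classification problem with Bayes regressor $f^*$, and let $\mathrm{Err}^*:=\frac12\min_{q\in\mathcal Q_k}\sum_{a\in[m]}W_1(r^*_a,q)$ with $r^*_a:=f^*\sharp(\mu^X_a\times\{a\})$. Let $\tilde f:\mathcal X\times\mathcal A\to\Delta_k$ be any deterministic measurable predictor, $\tilde r_a:=\tilde f\sharp(\mu^X_a\times\{a\})$, let $\tilde q\in\arg\min_{q\in\mathcal Q_k}\sum_{a}W_1(\tilde r_a,q)$, and for each $a$ let $T_a:\Delta_k\to\mathcal Y$ be the randomized function induced by an optimal coupling $\tilde\gamma_a\in\Gamma(\tilde r_a,\tilde q)$ for the cost $\|s-y\|_1$ (Markov kernel $K_a(s,B)=\tilde\gamma_a(B\mid s)$). Let $\bar h(x,a)=T_a(\tilde f(x,a))$. Then $$0\le\sum_{a\in[m]}\mathrm{Err}_a(\bar h)-\mathrm{Err}^*\le\sum_{a\in[m]}\mathbb E_{X\sim\mu^X_a}\big[\|\tilde f(X,a)-f^*(X,a)\|_1\big].$$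
   Context: Setup. $\mathcal X$ is a standard Borel space, $k\ge 2$, $\mathcal Y=\{e_1,\dots,e_k\}\subset\mathbb R^k$ is the set of standard basis vectors (one-hot labels), and $\mathcal A=[m]=\{1,\dots,m\}$. A classification problem is a probability distribution $\mu$ of a triple $(X,Y,A)$ on $\mathcal X\times\mathcal Y\times\mathcal A$ with $\mathbb P(A=a)>0$ for every $a$; $\mu_a$ is $\mu$ conditioned on $A=a$ and $\mu^X_a$ is the law of $X$ under $\mu_a$. A randomized function is given by a Markov kernel $K$ with $\mathbb P(f(u)\in B)=K(u,B)$, its randomness independent of $(X,Y,A)$. For a classifier $h:\mathcal X\times\mathcal A\to\mathcal Y$, $\mathrm{Err}_a(h):=\mathbb P(h(X,a)\neq Y\mid A=a)$. $\Delta_k=\{x\in\mathbb R^k:x\ge0,\ \sum_i x_i=1\}$. The Bayes regressor is $f^*(x,a)=\mathbb E_\mu[Y\mid X=x,A=a]\in\Delta_k$; $g\sharp(\mu^X_a\times\{a\})$ is the law of $g(X,a)$ for $X\sim\mu^X_a$. $\mathcal Q_k$ is the set of probability distributions supported on $\mathcal Y$. $\Gamma(p,q)$ is the set of couplings of $p$ and $q$, and $W_1(p,q)=\inf_{\gamma\in\Gamma(p,q)}\int\|s-s'\|_1\,d\gamma(s,s')$. *)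

theory Defs
  imports "HOL-Probability.Probability"
begin

text \<open>Labels: the label e_i in R^k is represented by its index i :: 'k (a finite type,
  k = CARD('k)); the vector itself is e i below.  Groups: a finite type 'g (m = CARD('g)).\<close>

definition e :: "'k::finite \<Rightarrow> real^'k" where
  "e i = axis i 1"

definition Delta :: "(real^'k::finite) set" where
  "Delta = {s. (\<forall>i. 0 \<le> s $ i) \<and> (\<Sum>i\<in>UNIV. s $ i) = 1}"

definition l1dist :: "real^'k::finite \<Rightarrow> real^'k \<Rightarrow> real" where
  "l1dist s t = (\<Sum>i\<in>UNIV. \<bar>s $ i - t $ i\<bar>)"

definition classification_problem ::
  "('x::polish_space \<times> 'k::finite \<times> 'g::finite) measure \<Rightarrow> bool" where
  "classification_problem \<mu> \<longleftrightarrow> prob_space \<mu> \<and>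
     sets \<mu> = sets (borel \<Otimes>\<^sub>M count_space UNIV \<Otimes>\<^sub>M count_space UNIV) \<and>
     (\<forall>a. measure \<mu> {z. snd (snd z) = a} > 0)"

definition probA :: "('x \<times> 'k \<times> 'g) measure \<Rightarrow> 'g \<Rightarrow> real" where
  "probA \<mu> a = measure \<mu> {z. snd (snd z) = a}"

definition muX :: "('x::topological_space \<times> 'k \<times> 'g) measure \<Rightarrow> 'g \<Rightarrow> 'x measure" where
  "muX \<mu> a = distr (density \<mu> (\<lambda>z. ennreal (indicator {z. snd (snd z) = a} z / probA \<mu> a)))
                   borel fst"

text \<open>Bayes regressor f*(x,a) = E[Y | X = x, A = a] (a version with values in Delta_k):
  its i-th coordinate is a version of the conditional probability P(Y = e_i | X, A).\<close>
definition bayes_regressor ::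
  "('x::polish_space \<times> 'k::finite \<times> 'g::finite) measure \<Rightarrow> ('x \<Rightarrow> 'g \<Rightarrow> real^'k) \<Rightarrow> bool" where
  "bayes_regressor \<mu> f \<longleftrightarrow>
     (\<forall>a. (\<lambda>x. f x a) \<in> borel_measurable borel) \<and> (\<forall>x a. f x a \<in> Delta) \<and>
     (\<forall>S a i. S \<in> sets borel \<longrightarrow>
        measure \<mu> {z. fst z \<in> S \<and> fst (snd z) = i \<and> snd (snd z) = a} =
        (\<integral>z. indicator {z. fst z \<in> S \<and> snd (snd z) = a} z * (f (fst z) a) $ i \<partial>\<mu>))"

definition pushf :: "('x::polish_space \<times> 'k::finite \<times> 'g) measure \<Rightarrow> ('x \<Rightarrow> 'g \<Rightarrow> real^'k) \<Rightarrow> 'g \<Rightarrow> (real^'k) measure" where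
  "pushf \<mu> g a = distr (muX \<mu> a) borel (\<lambda>x. g x a)"

definition Qk :: "(real^'k::finite) measure set" where
  "Qk = {q. prob_space q \<and> sets q = sets borel \<and> measure q (range e) = 1}"

definition couplings :: "(real^'k::finite) measure \<Rightarrow> (real^'k) measure \<Rightarrow> ((real^'k) \<times> (real^'k)) measure set" where
  "couplings p q = {\<gamma>. prob_space \<gamma> \<and> sets \<gamma> = sets (borel \<Otimes>\<^sub>M borel) \<and>
                        distr \<gamma> borel fst = p \<and> distr \<gamma> borel snd = q}"

definition transport_cost :: "((real^'k::finite) \<times> (real^'k)) measure \<Rightarrow> ennreal" where
  "transport_cost \<gamma> = (\<integral>\<^sup>+ z. ennreal (l1dist (fst z) (snd z)) \<partial>\<gamma>)"

definition W1 :: "(real^'k::finite) measure \<Rightarrow> (real^'k) measure \<Rightarrow> real" where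
  "W1 p q = enn2real (INF \<gamma>\<in>couplings p q. transport_cost \<gamma>)"

definition optimal_coupling :: "(real^'k::finite) measure \<Rightarrow> (real^'k) measure \<Rightarrow> ((real^'k) \<times> (real^'k)) measure \<Rightarrow> bool" where
  "optimal_coupling p q \<gamma> \<longleftrightarrow> \<gamma> \<in> couplings p q \<and>
     transport_cost \<gamma> = (INF \<gamma>'\<in>couplings p q. transport_cost \<gamma>')"

text \<open>A Markov kernel from Delta_k (inside R^k) to Y, given by K s j = K(s, {e_j}).\<close>
definition markov_kernel_Y :: "(real^'k::finite \<Rightarrow> 'k \<Rightarrow> real) \<Rightarrow> bool" where
  "markov_kernel_Y K \<longleftrightarrow> (\<forall>j. (\<lambda>s. K s j) \<in> borel_measurable borel) \<and>
     (\<forall>s j. 0 \<le> K s j) \<and> (\<forall>s. (\<Sum>j\<in>UNIV. K s j) = 1)"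

definition disintegrates :: "((real^'k::finite) \<times> (real^'k)) measure \<Rightarrow> (real^'k \<Rightarrow> 'k \<Rightarrow> real) \<Rightarrow> bool" where
  "disintegrates \<gamma> K \<longleftrightarrow> markov_kernel_Y K \<and>
     (\<forall>S j. S \<in> sets borel \<longrightarrow>
        measure \<gamma> (S \<times> {e j}) = (\<integral>s. indicator S s * K s j \<partial>(distr \<gamma> borel fst)))"

text \<open>Err_a(h) = P(h(X,a) \<noteq> Y | A = a) for a randomized classifier h given by the kernel
  H x a j = P(h(x,a) = e_j), with randomness independent of (X,Y,A).\<close>
definition Err :: "('x \<times> 'k \<times> 'g) measure \<Rightarrow> ('x \<Rightarrow> 'g \<Rightarrow> 'k \<Rightarrow> real) \<Rightarrow> 'g \<Rightarrow> real" where
  "Err \<mu> H a = (\<integral>z. indicator {z. snd (snd z) = a} z * (1 - H (fst z) a (fst (snd z))) \<partial>\<mu>) / probA \<mu> a"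

end

theory Submission
  imports Defs
begin


lemma e_nth: "e i $ j = (if j = i then 1 else 0)"
  by (simp add: e_def axis_def)

lemma e_inj: "e i = e j \<longleftrightarrow> i = j"
  by (metis e_nth vec_eq_iff zero_neq_one)

lemma inj_e: "inj e" by (simp add: inj_def e_inj)

lemma l1dist_nonneg: "0 \<le> l1dist s t"
  by (simp add: l1dist_def sum_nonneg)

lemma l1dist_sym: "l1dist s t = l1dist t s"
  by (simp add: l1dist_def abs_minus_commute)

lemma l1dist_tri: "l1dist s u \<le> l1dist s t + l1dist t u"
  unfolding l1dist_def sum.distrib[symmetric] by (rule sum_mono) linarith

lemma l1dist_e: assumes "s \<in> Delta" shows "l1dist s (e j) = 2 * (1 - s $ j)"
proof -
  have nn: "\<forall>i. 0 \<le> s $ i" and s1: "(\<Sum>i\<in>UNIV. s $ i) = 1" using assms by (auto simp: Delta_def)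
  have "l1dist s (e j) = (\<Sum>i\<in>UNIV. (if i = j then 1 - s $ j else s $ i))"
  proof (unfold l1dist_def e_nth, rule sum.cong)
    fix i
    have "s $ j \<le> 1" using s1 sum_nonneg_leq_bound[of UNIV "\<lambda>i. s $ i" 1 j] nn by auto
    then show "\<bar>s $ i - (if i = j then 1 else 0)\<bar> = (if i = j then 1 - s $ j else s $ i)"
      using nn[rule_format, of i] by auto
  qed simp
  also have "\<dots> = (1 - s $ j) + (\<Sum>i\<in>UNIV - {j}. s $ i)"
    by (subst sum.remove[of _ j]) (auto intro!: sum.cong)
  also have "(\<Sum>i\<in>UNIV - {j}. s $ i) = 1 - s $ j"
    using s1 sum.remove[of UNIV j "\<lambda>i. s $ i"] by simp
  finally show ?thesis by simp
qed

lemma l1dist_Delta_le: assumes "s \<in> Delta" "t \<in> Delta" shows "l1dist s t \<le> 2"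
proof -
  have "l1dist s t \<le> (\<Sum>i\<in>UNIV. s $ i + t $ i)"
    unfolding l1dist_def
  proof (rule sum_mono)
    fix i
    have "0 \<le> s $ i" "0 \<le> t $ i" using assms by (auto simp: Delta_def)
    then show "\<bar>s $ i - t $ i\<bar> \<le> s $ i + t $ i" by linarith
  qed
  also have "\<dots> = 2" using assms by (simp add: sum.distrib Delta_def)
  finally show ?thesis .
qed

lemma l1dist_e_le: assumes "s \<in> Delta" shows "l1dist s (e j) \<le> 2"
  using l1dist_e[OF assms] assms by (auto simp: Delta_def)

lemma l1dist_meas[measurable]:
  "f \<in> borel_measurable M \<Longrightarrow> g \<in> borel_measurable M \<Longrightarrow> (\<lambda>x. l1dist (f x) (g x)) \<in> borel_measurable M"
  unfolding l1dist_def
  by (intro borel_measurable_sum borel_measurable_abs borel_measurable_diff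
      measurable_compose[OF _ borel_measurable_nth])

lemma e_meas[measurable]: "e \<in> measurable (count_space UNIV) borel"
  by simp


definition mkcoup :: "'x measure \<Rightarrow> ('x \<Rightarrow> real^'k::finite) \<Rightarrow> ('x \<Rightarrow> 'k \<Rightarrow> real) \<Rightarrow> ((real^'k) \<times> (real^'k)) measure" where
  "mkcoup \<nu> g \<kappa> = distr (density (\<nu> \<Otimes>\<^sub>M count_space UNIV) (\<lambda>z. ennreal (\<kappa> (fst z) (snd z))))
      (borel \<Otimes>\<^sub>M borel) (\<lambda>z. (g (fst z), e (snd z)))"

lemma sets_mkcoup[simp]: "sets (mkcoup \<nu> g \<kappa>) = sets (borel \<Otimes>\<^sub>M borel)"
  by (simp add: mkcoup_def)

lemma nn_integral_mkcoup:
  fixes \<kappa> :: "'x \<Rightarrow> 'k::finite \<Rightarrow> real"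
  assumes g: "g \<in> borel_measurable \<nu>"
    and kmeas: "\<And>j. (\<lambda>x. \<kappa> x j) \<in> borel_measurable \<nu>"
    and f: "f \<in> borel_measurable (borel \<Otimes>\<^sub>M borel)"
  shows "(\<integral>\<^sup>+ z. f z \<partial>mkcoup \<nu> g \<kappa>) = (\<integral>\<^sup>+ x. (\<Sum>j\<in>UNIV. ennreal (\<kappa> x j) * f (g x, e j)) \<partial>\<nu>)"
proof -
  have kme: "\<And>j. (\<lambda>x. ennreal (\<kappa> x j)) \<in> borel_measurable \<nu>" using kmeas by simp
  have km: "(\<lambda>z. ennreal (\<kappa> (fst z) (snd z))) \<in> borel_measurable (\<nu> \<Otimes>\<^sub>M count_space UNIV)"
    by (rule measurable_compose_countable[where f="\<lambda>j z. ennreal (\<kappa> (fst z) j)" and g=snd])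
       (auto intro!: measurable_compose[OF measurable_fst kme])
  have gm: "(\<lambda>z. (g (fst z), e (snd z))) \<in> measurable (\<nu> \<Otimes>\<^sub>M count_space UNIV) (borel \<Otimes>\<^sub>M borel)"
    using g by measurable
  have gm': "(\<lambda>z. (g (fst z), e (snd z))) \<in> measurable (density (\<nu> \<Otimes>\<^sub>M count_space UNIV) (\<lambda>z. ennreal (\<kappa> (fst z) (snd z)))) (borel \<Otimes>\<^sub>M borel)"
    by (subst measurable_cong_sets[OF sets_density refl]) (rule gm)
  have "(\<integral>\<^sup>+ z. f z \<partial>mkcoup \<nu> g \<kappa>) =
        (\<integral>\<^sup>+ z. ennreal (\<kappa> (fst z) (snd z)) * f (g (fst z), e (snd z)) \<partial>(\<nu> \<Otimes>\<^sub>M count_space UNIV))"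
    unfolding mkcoup_def
    apply (subst nn_integral_distr[OF gm'])
     apply (simp add: f)
    apply (rule nn_integral_density[OF km])
    apply (rule measurable_compose[OF gm f])
    done
  also have "\<dots> = (\<integral>\<^sup>+ x. \<integral>\<^sup>+ j. ennreal (\<kappa> x j) * f (g x, e j) \<partial>count_space UNIV \<partial>\<nu>)"
    by (subst sigma_finite_measure.nn_integral_fst[symmetric, OF sigma_finite_measure_count_space_finite])
       (auto intro!: borel_measurable_times_ennreal km measurable_compose[OF gm f])
  also have "\<dots> = (\<integral>\<^sup>+ x. (\<Sum>j\<in>UNIV. ennreal (\<kappa> x j) * f (g x, e j)) \<partial>\<nu>)"
    by (simp add: nn_integral_count_space_finite)
  finally show ?thesis .
qed


lemma range_e_borel: "range e \<in> sets borel"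
  by (simp add: finite_imp_closed borel_closed)

lemma Qk_AE: assumes "q \<in> Qk" shows "AE x in q. x \<in> range e"
proof -
  have ps: "prob_space q" and s: "sets q = sets borel" and m: "measure q (range e) = 1"
    using assms by (auto simp: Qk_def)
  show ?thesis using prob_space.AE_in_set_eq_1[OF ps, of "range e"] s m range_e_borel by simp
qed

lemma Qk_emeasure:
  assumes q: "q \<in> Qk" and B: "B \<in> sets borel"
  shows "emeasure q B = (\<Sum>j\<in>UNIV. indicator B (e j) * emeasure q {e j})"
proof -
  have s: "sets q = sets borel" using q by (auto simp: Qk_def)
  have "emeasure q B = emeasure q (e ` {j. e j \<in> B})"
  proof (rule emeasure_eq_AE)
    show "AE x in q. (x \<in> B) = (x \<in> e ` {j. e j \<in> B})"
      using Qk_AE[OF q] by eventually_elim blast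
  next
    show "B \<in> sets q" using B s by simp
    have "closed (e ` {j. e j \<in> B})" by (intro finite_imp_closed finite_imageI) simp
    then show "e ` {j. e j \<in> B} \<in> sets q" unfolding s by (rule borel_closed)
  qed
  also have "\<dots> = (\<Sum>x\<in>e ` {j. e j \<in> B}. emeasure q {x})"
    by (rule emeasure_eq_sum_singleton) (simp_all add: s)
  also have "\<dots> = (\<Sum>j\<in>{j. e j \<in> B}. emeasure q {e j})"
    by (subst sum.reindex) (simp_all add: inj_on_def e_inj)
  also have "\<dots> = (\<Sum>j\<in>UNIV. indicator B (e j) * emeasure q {e j})"
  proof -
    have "(\<Sum>j\<in>UNIV. indicator B (e j) * emeasure q {e j}) = (\<Sum>j\<in>UNIV. if j \<in> {j. e j \<in> B} then emeasure q {e j} else 0)"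
      by (rule sum.cong) (simp_all add: indicator_def)
    also have "\<dots> = (\<Sum>j\<in>UNIV \<inter> {j. e j \<in> B}. emeasure q {e j})"
      by (rule sum.inter_restrict[symmetric]) simp
    finally show ?thesis by simp
  qed
  finally show ?thesis .
qed

lemma Qk_sum1: assumes q: "q \<in> Qk" shows "(\<Sum>j\<in>UNIV. emeasure q {e j}) = 1"
proof -
  have ps: "prob_space q" and s: "sets q = sets borel" using q by (auto simp: Qk_def)
  have "space q = UNIV" using sets_eq_imp_space_eq[OF s] by simp
  then have "emeasure q UNIV = 1" using prob_space.emeasure_space_1[OF ps] by simp
  then show ?thesis using Qk_emeasure[OF q, of UNIV] by simp
qed


lemma kappa_sum_ennreal:
  assumes knn: "\<And>j. 0 \<le> \<kappa> j" and ksum: "(\<Sum>j\<in>UNIV. \<kappa> j) = 1"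
  shows "(\<Sum>j\<in>(UNIV::'k::finite set). ennreal (\<kappa> j) * c) = c"
proof -
  have "(\<Sum>j\<in>(UNIV::'k set). ennreal (\<kappa> j) * c) = (\<Sum>j\<in>UNIV. ennreal (\<kappa> j)) * c"
    by (simp add: sum_distrib_right)
  also have "(\<Sum>j\<in>(UNIV::'k set). ennreal (\<kappa> j)) = 1"
    using sum_ennreal[of UNIV \<kappa>] knn ksum by simp
  finally show ?thesis by simp
qed

lemma coupling_exists:
  fixes \<nu> :: "'x measure" and g :: "'x \<Rightarrow> real^'k::finite" and \<kappa> :: "'x \<Rightarrow> 'k \<Rightarrow> real"
  assumes nu: "prob_space \<nu>" and g: "g \<in> borel_measurable \<nu>"
    and kmeas: "\<And>j. (\<lambda>x. \<kappa> x j) \<in> borel_measurable \<nu>"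
    and knn: "\<And>x j. 0 \<le> \<kappa> x j" and ksum: "\<And>x. (\<Sum>j\<in>UNIV. \<kappa> x j) = 1"
    and q: "q \<in> Qk"
    and marg: "\<And>j. (\<integral>\<^sup>+ x. ennreal (\<kappa> x j) \<partial>\<nu>) = emeasure q {e j}"
  shows "mkcoup \<nu> g \<kappa> \<in> couplings (distr \<nu> borel g) q"
    and "transport_cost (mkcoup \<nu> g \<kappa>) = (\<integral>\<^sup>+ x. ennreal (\<Sum>j\<in>UNIV. \<kappa> x j * l1dist (g x) (e j)) \<partial>\<nu>)"
proof -
  let ?\<gamma> = "mkcoup \<nu> g \<kappa>"
  have kme: "\<And>j. (\<lambda>x. ennreal (\<kappa> x j)) \<in> borel_measurable \<nu>" using kmeas by simp
  have fstm: "fst \<in> measurable ?\<gamma> borel" by (subst measurable_cong_sets[OF sets_mkcoup refl]) simp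
  have sndm: "snd \<in> measurable ?\<gamma> borel" by (subst measurable_cong_sets[OF sets_mkcoup refl]) simp
  have qs: "sets q = sets borel" and qp: "prob_space q" using q by (auto simp: Qk_def)
  have "emeasure ?\<gamma> (space ?\<gamma>) = (\<integral>\<^sup>+ z. 1 \<partial>?\<gamma>)" by simp
  also have "\<dots> = (\<integral>\<^sup>+ x. (\<Sum>j\<in>UNIV. ennreal (\<kappa> x j) * 1) \<partial>\<nu>)"
    by (rule nn_integral_mkcoup[OF g kmeas]) simp
  also have "\<dots> = (\<integral>\<^sup>+ x. 1 \<partial>\<nu>)"
    by (intro nn_integral_cong kappa_sum_ennreal knn ksum)
  also have "\<dots> = 1" using prob_space.emeasure_space_1[OF nu] by simp
  finally have pg: "prob_space ?\<gamma>" by (rule prob_spaceI)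
  have m1: "distr ?\<gamma> borel fst = distr \<nu> borel g"
  proof (rule measure_eqI)
    fix A assume "A \<in> sets (distr ?\<gamma> borel fst)"
    then have A: "A \<in> sets borel" by simp
    have "emeasure (distr ?\<gamma> borel fst) A = (\<integral>\<^sup>+ z. indicator A z \<partial>distr ?\<gamma> borel fst)"
      using A by simp
    also have "\<dots> = (\<integral>\<^sup>+ z. indicator A (fst z) \<partial>?\<gamma>)"
      by (rule nn_integral_distr[OF fstm]) (use A in simp)
    also have "\<dots> = (\<integral>\<^sup>+ x. (\<Sum>j\<in>UNIV. ennreal (\<kappa> x j) * indicator A (fst (g x, e j))) \<partial>\<nu>)"
      by (rule nn_integral_mkcoup[OF g kmeas]) (use A in simp)
    also have "\<dots> = (\<integral>\<^sup>+ x. indicator A (g x) \<partial>\<nu>)"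
      by (intro nn_integral_cong) (simp add: kappa_sum_ennreal knn ksum)
    also have "\<dots> = (\<integral>\<^sup>+ z. indicator A z \<partial>distr \<nu> borel g)"
      by (rule nn_integral_distr[symmetric, OF g]) (use A in simp)
    also have "\<dots> = emeasure (distr \<nu> borel g) A" using A by simp
    finally show "emeasure (distr ?\<gamma> borel fst) A = emeasure (distr \<nu> borel g) A" .
  qed simp
  have m2: "distr ?\<gamma> borel snd = q"
  proof (rule measure_eqI)
    fix A assume "A \<in> sets (distr ?\<gamma> borel snd)"
    then have A: "A \<in> sets borel" by simp
    have "emeasure (distr ?\<gamma> borel snd) A = (\<integral>\<^sup>+ z. indicator A z \<partial>distr ?\<gamma> borel snd)"
      using A by simp
    also have "\<dots> = (\<integral>\<^sup>+ z. indicator A (snd z) \<partial>?\<gamma>)"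
      by (rule nn_integral_distr[OF sndm]) (use A in simp)
    also have "\<dots> = (\<integral>\<^sup>+ x. (\<Sum>j\<in>UNIV. ennreal (\<kappa> x j) * indicator A (snd (g x, e j))) \<partial>\<nu>)"
      by (rule nn_integral_mkcoup[OF g kmeas]) (use A in simp)
    also have "\<dots> = (\<Sum>j\<in>UNIV. \<integral>\<^sup>+ x. ennreal (\<kappa> x j) * indicator A (e j) \<partial>\<nu>)"
      unfolding snd_conv by (rule nn_integral_sum) (intro borel_measurable_times_ennreal kme borel_measurable_const)
    also have "\<dots> = (\<Sum>j\<in>UNIV. indicator A (e j) * emeasure q {e j})"
      by (intro sum.cong refl) (simp add: nn_integral_multc kme marg mult.commute)
    also have "\<dots> = emeasure q A" using Qk_emeasure[OF q A] by simp
    finally show "emeasure (distr ?\<gamma> borel snd) A = emeasure q A" .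
  qed (simp add: qs)
  show "?\<gamma> \<in> couplings (distr \<nu> borel g) q"
    unfolding couplings_def using pg m1 m2 by simp
  have "transport_cost ?\<gamma> = (\<integral>\<^sup>+ x. (\<Sum>j\<in>UNIV. ennreal (\<kappa> x j) * ennreal (l1dist (fst (g x, e j)) (snd (g x, e j)))) \<partial>\<nu>)"
    unfolding transport_cost_def by (rule nn_integral_mkcoup[OF g kmeas]) simp
  also have "\<dots> = (\<integral>\<^sup>+ x. ennreal (\<Sum>j\<in>UNIV. \<kappa> x j * l1dist (g x) (e j)) \<partial>\<nu>)"
    by (intro nn_integral_cong) (simp add: sum_ennreal[symmetric] knn l1dist_nonneg ennreal_mult)
  finally show "transport_cost ?\<gamma> = (\<integral>\<^sup>+ x. ennreal (\<Sum>j\<in>UNIV. \<kappa> x j * l1dist (g x) (e j)) \<partial>\<nu>)" .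
qed


lemma cost_disint:
  fixes r q :: "(real^'k::finite) measure"
  assumes \<gamma>: "\<gamma> \<in> couplings r q" and q: "q \<in> Qk"
    and Km: "\<And>j. (\<lambda>s. K s j) \<in> borel_measurable borel" and Knn: "\<And>s j. 0 \<le> K s j"
    and dis: "\<And>S j. S \<in> sets borel \<Longrightarrow> emeasure \<gamma> (S \<times> {e j}) = (\<integral>\<^sup>+ s. ennreal (K s j) * indicator S s \<partial>r)"
  shows "transport_cost \<gamma> = (\<integral>\<^sup>+ s. (\<Sum>j\<in>UNIV. ennreal (K s j) * ennreal (l1dist s (e j))) \<partial>r)"
    and "\<And>j. (\<integral>\<^sup>+ s. ennreal (K s j) \<partial>r) = emeasure q {e j}"
proof -
  have sg: "sets \<gamma> = sets (borel \<Otimes>\<^sub>M borel)" and r: "r = distr \<gamma> borel fst" and qd: "q = distr \<gamma> borel snd"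
    using \<gamma> by (auto simp: couplings_def)
  have sr: "sets r = sets borel" using r by simp
  have spg: "space \<gamma> = UNIV" using sets_eq_imp_space_eq[OF sg] by (simp add: space_pair_measure)
  have fstm: "fst \<in> measurable \<gamma> borel" by (subst measurable_cong_sets[OF sg refl]) simp
  have sndm: "snd \<in> measurable \<gamma> borel" by (subst measurable_cong_sets[OF sg refl]) simp
  have Kme: "\<And>j. (\<lambda>s. ennreal (K s j)) \<in> borel_measurable r"
    using Km by (simp add: measurable_cong_sets[OF sr refl])
  show marg: "\<And>j. (\<integral>\<^sup>+ s. ennreal (K s j) \<partial>r) = emeasure q {e j}"
  proof -
    fix j
    have "(\<integral>\<^sup>+ s. ennreal (K s j) \<partial>r) = emeasure \<gamma> (UNIV \<times> {e j})"
      using dis[of UNIV j] by simp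
    also have "\<dots> = emeasure (distr \<gamma> borel snd) {e j}"
      by (subst emeasure_distr[OF sndm]) (auto simp: spg intro!: arg_cong[where f="emeasure \<gamma>"])
    finally show "(\<integral>\<^sup>+ s. ennreal (K s j) \<partial>r) = emeasure q {e j}" using qd by simp
  qed
  have AEe: "AE z in \<gamma>. snd z \<in> range e"
  proof -
    have "AE t in distr \<gamma> borel snd. t \<in> range e" proof -
      have "AE t in q. t \<in> range e" by (rule Qk_AE[OF q])
      then show ?thesis by (subst qd[symmetric])
    qed
    then show ?thesis by (subst (asm) AE_distr_iff[OF sndm]) (simp_all add: range_e_borel)
  qed
  have termj: "(\<integral>\<^sup>+ z. indicator {e j} (snd z) * ennreal (l1dist (fst z) (e j)) \<partial>\<gamma>)
      = (\<integral>\<^sup>+ s. ennreal (K s j) * ennreal (l1dist s (e j)) \<partial>r)" for j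
  proof -
    let ?D = "density \<gamma> (\<lambda>z. indicator {e j} (snd z))"
    have im: "(\<lambda>z. indicator {e j} (snd z) :: ennreal) \<in> borel_measurable \<gamma>"
      by (intro measurable_compose[OF sndm]) simp
    have fstm': "fst \<in> measurable ?D borel" using fstm by simp
    have N: "distr ?D borel fst = density r (\<lambda>s. ennreal (K s j))"
    proof (rule measure_eqI)
      fix S assume "S \<in> sets (distr ?D borel fst)"
      then have S: "S \<in> sets borel" by simp
      have "emeasure (distr ?D borel fst) S = emeasure ?D (fst -` S \<inter> space ?D)"
        by (rule emeasure_distr[OF fstm' S])
      also have "\<dots> = (\<integral>\<^sup>+ z. indicator {e j} (snd z) * indicator (fst -` S \<inter> space ?D) z \<partial>\<gamma>)"
        by (rule emeasure_density[OF im]) (use measurable_sets[OF fstm S] in \<open>simp add: spg\<close>)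
      also have "\<dots> = (\<integral>\<^sup>+ z. indicator (S \<times> {e j}) z \<partial>\<gamma>)"
        by (intro nn_integral_cong) (auto simp: spg indicator_def)
      also have "\<dots> = emeasure \<gamma> (S \<times> {e j})"
        by (rule nn_integral_indicator) (use S in \<open>simp add: sg\<close>)
      also have "\<dots> = emeasure (density r (\<lambda>s. ennreal (K s j))) S"
        using dis[OF S, of j] S by (simp add: emeasure_density Kme sr mult.commute)
      finally show "emeasure (distr ?D borel fst) S = emeasure (density r (\<lambda>s. ennreal (K s j))) S" .
    qed (simp add: sr)
    have "(\<integral>\<^sup>+ s. ennreal (K s j) * ennreal (l1dist s (e j)) \<partial>r)
        = (\<integral>\<^sup>+ s. ennreal (l1dist s (e j)) \<partial>density r (\<lambda>s. ennreal (K s j)))"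
      by (rule nn_integral_density[symmetric, OF Kme]) (simp add: measurable_cong_sets[OF sr refl])
    also have "\<dots> = (\<integral>\<^sup>+ s. ennreal (l1dist s (e j)) \<partial>distr ?D borel fst)" by (simp add: N)
    also have "\<dots> = (\<integral>\<^sup>+ z. ennreal (l1dist (fst z) (e j)) \<partial>?D)"
      by (rule nn_integral_distr[OF fstm']) simp
    also have "\<dots> = (\<integral>\<^sup>+ z. indicator {e j} (snd z) * ennreal (l1dist (fst z) (e j)) \<partial>\<gamma>)"
      by (rule nn_integral_density[OF im]) (intro measurable_compose[OF fstm] measurable_ennreal l1dist_meas; simp)
    finally show ?thesis by simp
  qed
  have "transport_cost \<gamma> = (\<integral>\<^sup>+ z. (\<Sum>j\<in>UNIV. indicator {e j} (snd z) * ennreal (l1dist (fst z) (e j))) \<partial>\<gamma>)"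
    unfolding transport_cost_def
  proof (rule nn_integral_cong_AE)
    show "AE z in \<gamma>. ennreal (l1dist (fst z) (snd z)) = (\<Sum>j\<in>UNIV. indicator {e j} (snd z) * ennreal (l1dist (fst z) (e j)))"
      using AEe
    proof eventually_elim
      case (elim z)
      then obtain i where i: "snd z = e i" by blast
      have "(\<Sum>j\<in>UNIV. indicator {e j} (snd z) * ennreal (l1dist (fst z) (e j)))
          = (\<Sum>j\<in>UNIV. (if j = i then ennreal (l1dist (fst z) (e j)) else 0))"
        by (intro sum.cong) (auto simp: i e_inj)
      also have "\<dots> = ennreal (l1dist (fst z) (snd z))" by (simp add: i)
      finally show ?case by simp
    qed
  qed
  also have "\<dots> = (\<Sum>j\<in>UNIV. \<integral>\<^sup>+ z. indicator {e j} (snd z) * ennreal (l1dist (fst z) (e j)) \<partial>\<gamma>)"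
    by (rule nn_integral_sum) (intro borel_measurable_times_ennreal measurable_compose[OF sndm] measurable_compose[OF fstm] measurable_ennreal l1dist_meas; simp)
  also have "\<dots> = (\<Sum>j\<in>UNIV. \<integral>\<^sup>+ s. ennreal (K s j) * ennreal (l1dist s (e j)) \<partial>r)"
    by (simp add: termj)
  also have "\<dots> = (\<integral>\<^sup>+ s. (\<Sum>j\<in>UNIV. ennreal (K s j) * ennreal (l1dist s (e j))) \<partial>r)"
    by (rule nn_integral_sum[symmetric]) (intro borel_measurable_times_ennreal Kme measurable_ennreal l1dist_meas; simp add: measurable_cong_sets[OF sr refl])
  finally show "transport_cost \<gamma> = (\<integral>\<^sup>+ s. (\<Sum>j\<in>UNIV. ennreal (K s j) * ennreal (l1dist s (e j))) \<partial>r)" .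
qed


lemma emeasure_Nj:
  fixes \<gamma> :: "((real^'k::finite) \<times> (real^'k)) measure"
  assumes sg: "sets \<gamma> = sets (borel \<Otimes>\<^sub>M borel)" and S: "S \<in> sets borel"
  shows "emeasure (distr (density \<gamma> (\<lambda>z. indicator {e j} (snd z))) borel fst) S = emeasure \<gamma> (S \<times> {e j})"
proof -
  let ?D = "density \<gamma> (\<lambda>z. indicator {e j} (snd z))"
  have spg: "space \<gamma> = UNIV" using sets_eq_imp_space_eq[OF sg] by (simp add: space_pair_measure)
  have fstm: "fst \<in> measurable \<gamma> borel" by (subst measurable_cong_sets[OF sg refl]) simp
  have sndm: "snd \<in> measurable \<gamma> borel" by (subst measurable_cong_sets[OF sg refl]) simp
  have im: "(\<lambda>z. indicator {e j} (snd z) :: ennreal) \<in> borel_measurable \<gamma>"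
    by (intro measurable_compose[OF sndm]) simp
  have fstm': "fst \<in> measurable ?D borel" using fstm by simp
  have "emeasure (distr ?D borel fst) S = emeasure ?D (fst -` S \<inter> space ?D)"
    by (rule emeasure_distr[OF fstm' S])
  also have "\<dots> = (\<integral>\<^sup>+ z. indicator {e j} (snd z) * indicator (fst -` S \<inter> space ?D) z \<partial>\<gamma>)"
    by (rule emeasure_density[OF im]) (use measurable_sets[OF fstm S] in \<open>simp add: spg\<close>)
  also have "\<dots> = (\<integral>\<^sup>+ z. indicator (S \<times> {e j}) z \<partial>\<gamma>)"
    by (intro nn_integral_cong) (auto simp: spg indicator_def)
  also have "\<dots> = emeasure \<gamma> (S \<times> {e j})"
    by (rule nn_integral_indicator) (use S in \<open>simp add: sg\<close>)
  finally show ?thesis .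
qed

lemma kernel_exists:
  fixes r q :: "(real^'k::finite) measure"
  assumes \<gamma>: "\<gamma> \<in> couplings r q" and q: "q \<in> Qk"
  shows "\<exists>K. (\<forall>j. (\<lambda>s. K s j) \<in> borel_measurable borel) \<and> (\<forall>s j. 0 \<le> K s j) \<and> (\<forall>s. (\<Sum>j\<in>UNIV. K s j) = 1) \<and>
     (\<forall>S j. S \<in> sets borel \<longrightarrow> emeasure \<gamma> (S \<times> {e j}) = (\<integral>\<^sup>+ s. ennreal (K s j) * indicator S s \<partial>r))"
proof -
  have sg: "sets \<gamma> = sets (borel \<Otimes>\<^sub>M borel)" and r: "r = distr \<gamma> borel fst" and qd: "q = distr \<gamma> borel snd"
    and pg: "prob_space \<gamma>"
    using \<gamma> by (auto simp: couplings_def)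
  have sr: "sets r = sets borel" using r by simp
  have spg: "space \<gamma> = UNIV" using sets_eq_imp_space_eq[OF sg] by (simp add: space_pair_measure)
  have fstm: "fst \<in> measurable \<gamma> borel" by (subst measurable_cong_sets[OF sg refl]) simp
  have sndm: "snd \<in> measurable \<gamma> borel" by (subst measurable_cong_sets[OF sg refl]) simp
  have pr: "prob_space r" unfolding r by (rule prob_space.prob_space_distr[OF pg fstm])
  interpret r: sigma_finite_measure r by (rule prob_space_imp_sigma_finite[OF pr])
  have er: "emeasure r S = emeasure \<gamma> (S \<times> UNIV)" if S: "S \<in> sets borel" for S
    unfolding r by (subst emeasure_distr[OF fstm S]) (auto simp: spg intro!: arg_cong[where f="emeasure \<gamma>"])
  have AEe: "AE z in \<gamma>. snd z \<in> range e"
  proof -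
    have "AE t in distr \<gamma> borel snd. t \<in> range e" proof -
      have "AE t in q. t \<in> range e" by (rule Qk_AE[OF q])
      then show ?thesis by (subst qd[symmetric])
    qed
    then show ?thesis by (subst (asm) AE_distr_iff[OF sndm]) (simp_all add: range_e_borel)
  qed
  define N where "N j = distr (density \<gamma> (\<lambda>z. indicator {e j} (snd z))) borel fst" for j
  have eN: "emeasure (N j) S = emeasure \<gamma> (S \<times> {e j})" if "S \<in> sets borel" for S j
    unfolding N_def by (rule emeasure_Nj[OF sg that])
  have "\<exists>f\<in>borel_measurable r. density r f = N j" for j
  proof (rule r.Radon_Nikodym)
    show "sets (N j) = sets r" by (simp add: N_def sr)
    show "absolutely_continuous r (N j)"
      unfolding absolutely_continuous_def
    proof
      fix S assume "S \<in> null_sets r"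
      then have S: "S \<in> sets borel" and S0: "emeasure r S = 0" by (auto simp: sr)
      have "emeasure \<gamma> (S \<times> {e j}) \<le> emeasure \<gamma> (S \<times> UNIV)"
        by (rule emeasure_mono) (use S in \<open>auto simp: sg\<close>)
      then have "emeasure (N j) S = 0" using eN[OF S] er[OF S] S0 by simp
      then show "S \<in> null_sets (N j)" using S by (simp add: N_def null_sets_def)
    qed
  qed
  then obtain f where fm: "\<And>j. f j \<in> borel_measurable r" and fN: "\<And>j. density r (f j) = N j"
    by metis
  have fmb[measurable]: "\<And>j. f j \<in> borel_measurable borel" using fm by (simp add: measurable_cong_sets[OF sr refl])
  have sumf: "density r (\<lambda>s. \<Sum>j\<in>UNIV. f j s) = density r (\<lambda>_. 1)"
  proof (rule measure_eqI)
    fix S assume "S \<in> sets (density r (\<lambda>s. \<Sum>j\<in>UNIV. f j s))"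
    then have S: "S \<in> sets borel" by (simp add: sr)
    have "emeasure (density r (\<lambda>s. \<Sum>j\<in>UNIV. f j s)) S = (\<integral>\<^sup>+ s. (\<Sum>j\<in>UNIV. f j s) * indicator S s \<partial>r)"
      by (rule emeasure_density) (use S fm in \<open>simp_all add: sr\<close>)
    also have "\<dots> = (\<Sum>j\<in>UNIV. \<integral>\<^sup>+ s. f j s * indicator S s \<partial>r)"
      unfolding sum_distrib_right by (rule nn_integral_sum) (intro borel_measurable_times_ennreal fm borel_measurable_indicator, use S in \<open>simp add: sr\<close>)
    also have "\<dots> = (\<Sum>j\<in>UNIV. emeasure (N j) S)"
      by (intro sum.cong refl) (metis fN emeasure_density fm S sr)
    also have "\<dots> = (\<Sum>j\<in>UNIV. emeasure \<gamma> (S \<times> {e j}))" using eN[OF S] by simp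
    also have "\<dots> = emeasure \<gamma> (\<Union>j\<in>UNIV. S \<times> {e j})"
      by (rule sum_emeasure) (use S in \<open>auto simp: sg disjoint_family_on_def e_inj\<close>)
    also have "\<dots> = emeasure \<gamma> (S \<times> UNIV)"
    proof (rule emeasure_eq_AE)
      show "AE z in \<gamma>. (z \<in> (\<Union>j\<in>UNIV. S \<times> {e j})) = (z \<in> S \<times> UNIV)"
        using AEe by eventually_elim auto
    qed (use S in \<open>auto simp: sg\<close>)
    also have "\<dots> = emeasure r S" using er[OF S] by simp
    also have "\<dots> = emeasure (density r (\<lambda>_. 1)) S" by (simp add: density_1)
    finally show "emeasure (density r (\<lambda>s. \<Sum>j\<in>UNIV. f j s)) S = emeasure (density r (\<lambda>_. 1)) S" .
  qed simp
  have AE1: "AE s in r. (\<Sum>j\<in>UNIV. f j s) = 1"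
    by (rule r.density_unique[OF _ _ sumf]) (use fm in simp_all)
  define K where "K s j = (if (\<Sum>i\<in>UNIV. f i s) = 1 then enn2real (f j s) else (if j = undefined then 1 else 0))" for s j
  have fle: "f j s < \<top>" if "(\<Sum>i\<in>UNIV. f i s) = 1" for s j
  proof -
    have "f j s \<le> (\<Sum>i\<in>UNIV. f i s)" by (rule member_le_sum) simp_all
    then have "f j s \<le> 1" using that by simp
    then show ?thesis using ennreal_one_less_top le_less_trans by blast
  qed
  have Km: "(\<lambda>s. K s j) \<in> borel_measurable borel" for j
    unfolding K_def by measurable
  have Knn: "0 \<le> K s j" for s j by (simp add: K_def)
  have Ksum: "(\<Sum>j\<in>UNIV. K s j) = 1" for s
  proof (cases "(\<Sum>i\<in>UNIV. f i s) = 1")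
    case True
    then have "(\<Sum>j\<in>UNIV. K s j) = (\<Sum>j\<in>UNIV. enn2real (f j s))" by (simp add: K_def)
    also have "\<dots> = enn2real (\<Sum>j\<in>UNIV. f j s)" by (subst enn2real_sum) (use fle[OF True] in auto)
    finally show ?thesis using True by simp
  next
    case False
    then show ?thesis by (simp add: K_def)
  qed
  have Kdis: "emeasure \<gamma> (S \<times> {e j}) = (\<integral>\<^sup>+ s. ennreal (K s j) * indicator S s \<partial>r)"
    if S: "S \<in> sets borel" for S j
  proof -
    have "emeasure \<gamma> (S \<times> {e j}) = emeasure (density r (f j)) S" using eN[OF S] fN by simp
    also have "\<dots> = (\<integral>\<^sup>+ s. f j s * indicator S s \<partial>r)"
      by (rule emeasure_density) (use S fm in \<open>simp_all add: sr\<close>)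
    also have "\<dots> = (\<integral>\<^sup>+ s. ennreal (K s j) * indicator S s \<partial>r)"
    proof (rule nn_integral_cong_AE)
      show "AE s in r. f j s * indicator S s = ennreal (K s j) * indicator S s"
        using AE1 by eventually_elim (simp add: K_def fle)
    qed
    finally show ?thesis .
  qed
  show ?thesis using Km Knn Ksum Kdis by blast
qed


lemma integrable_bdd:
  assumes "finite_measure M" "f \<in> borel_measurable M" "\<And>x. \<bar>f x\<bar> \<le> (B::real)"
  shows "integrable M f"
  by (rule finite_measure.integrable_const_bound[OF assms(1) _ assms(2), of B]) (simp add: assms(3))

context
  fixes \<mu> :: "('x::polish_space \<times> 'k::finite \<times> 'g::finite) measure"
  assumes cp: "classification_problem \<mu>"
begin

lemma smu: "sets \<mu> = sets (borel \<Otimes>\<^sub>M count_space UNIV \<Otimes>\<^sub>M count_space UNIV)"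
  using cp by (simp add: classification_problem_def)

lemma pmu: "prob_space \<mu>"
  using cp by (simp add: classification_problem_def)

lemma fmu: "finite_measure \<mu>"
  using pmu by (simp add: prob_space_def)

lemma pA: "0 < probA \<mu> a"
  using cp by (simp add: classification_problem_def probA_def)

lemma mu_fst[measurable]: "fst \<in> measurable \<mu> borel"
  by (subst measurable_cong_sets[OF smu refl]) simp

lemma mu_Y[measurable]: "(\<lambda>z. fst (snd z)) \<in> measurable \<mu> (count_space UNIV)"
  by (subst measurable_cong_sets[OF smu refl]) simp

lemma mu_A[measurable]: "(\<lambda>z. snd (snd z)) \<in> measurable \<mu> (count_space UNIV)"
  by (subst measurable_cong_sets[OF smu refl]) simp

lemma setA[measurable]: "{z. snd (snd z) = a} \<in> sets \<mu>"
proof -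
  have "{z. snd (snd z) = a} = (\<lambda>z. snd (snd z)) -` {a} \<inter> space \<mu>"
    using sets_eq_imp_space_eq[OF smu] by (auto simp: space_pair_measure)
  then show ?thesis using measurable_sets[OF mu_A, of "{a}"] by simp
qed


lemma dens_meas[measurable]: "(\<lambda>z. indicator {z. snd (snd z) = a} z / probA \<mu> a :: real) \<in> borel_measurable \<mu>"
  by measurable

lemma muX_integral:
  assumes phi: "\<phi> \<in> borel_measurable borel"
  shows "(\<integral>x. \<phi> x \<partial>muX \<mu> a) = (\<integral>z. (indicator {z. snd (snd z) = a} z / probA \<mu> a) * \<phi> (fst z) \<partial>\<mu>)"
proof -
  let ?g = "\<lambda>z. indicator {z. snd (snd z) = a} z / probA \<mu> a :: real"
  have fm: "fst \<in> measurable (density \<mu> (\<lambda>z. ennreal (?g z))) borel" by simp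
  have "(\<integral>x. \<phi> x \<partial>muX \<mu> a) = (\<integral>z. \<phi> (fst z) \<partial>density \<mu> (\<lambda>z. ennreal (?g z)))"
    unfolding muX_def by (rule integral_distr[OF fm phi])
  also have "\<dots> = (\<integral>z. ?g z *\<^sub>R \<phi> (fst z) \<partial>\<mu>)"
    by (rule integral_density) (use pA[of a] phi in auto)
  finally show ?thesis by simp
qed

lemma muX_sets[simp]: "sets (muX \<mu> a) = sets borel"
  by (simp add: muX_def)

lemma muX_prob: "prob_space (muX \<mu> a)"
proof -
  let ?g = "\<lambda>z. indicator {z. snd (snd z) = a} z / probA \<mu> a :: real"
  have "emeasure (density \<mu> (\<lambda>z. ennreal (?g z))) (space \<mu>) = (\<integral>\<^sup>+ z. ennreal (?g z) \<partial>\<mu>)"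
    by (subst emeasure_density) (auto intro!: nn_integral_cong)
  also have "\<dots> = ennreal (\<integral>z. ?g z \<partial>\<mu>)"
    by (rule nn_integral_eq_integral) (auto intro!: integrable_bdd[OF fmu, of _ "1 / probA \<mu> a"] simp: pA less_imp_le indicator_def)
  also have "(\<integral>z. ?g z \<partial>\<mu>) = measure \<mu> {z. snd (snd z) = a} / probA \<mu> a"
    by simp
  also have "\<dots> = 1" using pA[of a] by (simp add: probA_def)
  finally have "prob_space (density \<mu> (\<lambda>z. ennreal (?g z)))" by (intro prob_spaceI) simp
  then show ?thesis unfolding muX_def by (rule prob_space.prob_space_distr) simp
qed


lemma bayes_key:
  assumes bayes: "bayes_regressor \<mu> fstar"
    and phi: "\<phi> \<in> borel_measurable borel" and phib: "\<And>x. \<bar>\<phi> x\<bar> \<le> B"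
  shows "(\<integral>z. indicator {z. snd (snd z) = a \<and> fst (snd z) = i} z * \<phi> (fst z) \<partial>\<mu>)
       = (\<integral>z. indicator {z. snd (snd z) = a} z * ((fstar (fst z) a) $ i * \<phi> (fst z)) \<partial>\<mu>)"
proof -
  have fsm[measurable]: "(\<lambda>x. fstar x a) \<in> borel_measurable borel" and fsD: "\<And>x. fstar x a \<in> Delta"
    using bayes by (auto simp: bayes_regressor_def)
  have fs01: "0 \<le> fstar x a $ i" "fstar x a $ i \<le> 1" for x
  proof -
    have nn: "\<forall>j. 0 \<le> fstar x a $ j" and s1: "(\<Sum>j\<in>UNIV. fstar x a $ j) = 1" using fsD[of x] by (auto simp: Delta_def)
    show "0 \<le> fstar x a $ i" using nn by simp
    show "fstar x a $ i \<le> 1" using s1 member_le_sum[of i UNIV "\<lambda>j. fstar x a $ j"] nn by simp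
  qed
  let ?h1 = "\<lambda>z. indicator {z. snd (snd z) = a \<and> fst (snd z) = i} z :: real"
  let ?h2 = "\<lambda>z. indicator {z. snd (snd z) = a} z * (fstar (fst z) a) $ i :: real"
  have fsi[measurable]: "(\<lambda>z. fstar (fst z) a $ i) \<in> borel_measurable \<mu>"
    by (rule measurable_compose[OF mu_fst measurable_compose[OF fsm borel_measurable_nth]])
  have h1m[measurable]: "?h1 \<in> borel_measurable \<mu>" by measurable
  have h2m[measurable]: "?h2 \<in> borel_measurable \<mu>" by (intro borel_measurable_times fsi) measurable
  have h1nn: "\<And>z. 0 \<le> ?h1 z" by simp
  have h2nn: "\<And>z. 0 \<le> ?h2 z" using fs01 by simp
  let ?M1 = "distr (density \<mu> (\<lambda>z. ennreal (?h1 z))) borel fst"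
  let ?M2 = "distr (density \<mu> (\<lambda>z. ennreal (?h2 z))) borel fst"
  have spmu: "space \<mu> = UNIV" using sets_eq_imp_space_eq[OF smu] by (simp add: space_pair_measure)
  have eq: "?M1 = ?M2"
  proof (rule measure_eqI)
    fix S assume "S \<in> sets ?M1"
    then have S[measurable]: "S \<in> sets borel" by simp
    let ?E = "{z. fst z \<in> S \<and> fst (snd z) = i \<and> snd (snd z) = a}"
    have Em: "?E \<in> sets \<mu>"
    proof -
      have "?E = (fst -` S \<inter> space \<mu>) \<inter> ((\<lambda>z. fst (snd z)) -` {i} \<inter> space \<mu>) \<inter> ((\<lambda>z. snd (snd z)) -` {a} \<inter> space \<mu>)"
        by (auto simp: spmu)
      also have "\<dots> \<in> sets \<mu>"
        by (intro sets.Int measurable_sets[OF mu_fst S] measurable_sets[OF mu_Y] measurable_sets[OF mu_A]) simp_all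
      finally show ?thesis .
    qed
    have "emeasure ?M1 S = emeasure (density \<mu> (\<lambda>z. ennreal (?h1 z))) (fst -` S \<inter> space \<mu>)"
      by (subst emeasure_distr) simp_all
    also have "\<dots> = (\<integral>\<^sup>+ z. ennreal (?h1 z) * indicator (fst -` S \<inter> space \<mu>) z \<partial>\<mu>)"
      by (rule emeasure_density) (simp_all add: spmu[symmetric] measurable_sets[OF mu_fst S])
    also have "\<dots> = (\<integral>\<^sup>+ z. indicator ?E z \<partial>\<mu>)"
      by (intro nn_integral_cong) (auto simp: spmu indicator_def)
    also have "\<dots> = emeasure \<mu> ?E" using Em by simp
    also have "\<dots> = ennreal (measure \<mu> ?E)" using fmu by (simp add: finite_measure.emeasure_eq_measure)
    also have "measure \<mu> ?E = (\<integral>z. indicator {z. fst z \<in> S \<and> snd (snd z) = a} z * (fstar (fst z) a) $ i \<partial>\<mu>)"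
      using bayes S by (simp add: bayes_regressor_def)
    also have "ennreal \<dots> = (\<integral>\<^sup>+ z. ennreal (indicator {z. fst z \<in> S \<and> snd (snd z) = a} z * (fstar (fst z) a) $ i) \<partial>\<mu>)"
      by (rule nn_integral_eq_integral[symmetric]) (auto intro!: integrable_bdd[OF fmu, of _ 1] simp: fs01 indicator_def abs_le_iff)
    also have "\<dots> = (\<integral>\<^sup>+ z. ennreal (?h2 z) * indicator (fst -` S \<inter> space \<mu>) z \<partial>\<mu>)"
      by (intro nn_integral_cong) (auto simp: spmu indicator_def)
    also have "\<dots> = emeasure (density \<mu> (\<lambda>z. ennreal (?h2 z))) (fst -` S \<inter> space \<mu>)"
      by (rule emeasure_density[symmetric]) (simp_all add: spmu[symmetric] measurable_sets[OF mu_fst S])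
    also have "\<dots> = emeasure ?M2 S"
      by (subst emeasure_distr) simp_all
    finally show "emeasure ?M1 S = emeasure ?M2 S" .
  qed simp
  have pfm: "(\<lambda>z. \<phi> (fst z)) \<in> borel_measurable \<mu>" by (rule measurable_compose[OF mu_fst phi])
  have "(\<integral>z. ?h1 z * \<phi> (fst z) \<partial>\<mu>) = (\<integral>z. \<phi> (fst z) \<partial>density \<mu> (\<lambda>z. ennreal (?h1 z)))"
    by (subst integral_density[OF pfm h1m]) simp_all
  also have "\<dots> = (\<integral>x. \<phi> x \<partial>?M1)"
    by (rule integral_distr[symmetric]) (simp_all add: phi)
  also have "\<dots> = (\<integral>x. \<phi> x \<partial>?M2)" using eq by simp
  also have "\<dots> = (\<integral>z. \<phi> (fst z) \<partial>density \<mu> (\<lambda>z. ennreal (?h2 z)))"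
    by (rule integral_distr) (simp_all add: phi)
  also have "\<dots> = (\<integral>z. ?h2 z * \<phi> (fst z) \<partial>\<mu>)"
    by (subst integral_density[OF pfm h2m]) (simp_all add: h2nn)
  finally show ?thesis by (simp add: mult.assoc)
qed


lemma Err_formula:
  assumes bayes: "bayes_regressor \<mu> fstar"
    and Hm: "\<And>i. (\<lambda>x. H x a i) \<in> borel_measurable borel"
    and H0: "\<And>x i. 0 \<le> H x a i" and H1: "\<And>x i. H x a i \<le> 1"
  shows "Err \<mu> H a = (\<integral>x. (\<Sum>i\<in>UNIV. fstar x a $ i * (1 - H x a i)) \<partial>muX \<mu> a)"
proof -
  have fsm[measurable]: "(\<lambda>x. fstar x a) \<in> borel_measurable borel" and fsD: "\<And>x. fstar x a \<in> Delta"
    using bayes by (auto simp: bayes_regressor_def)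
  have fs01: "0 \<le> fstar x a $ i" "fstar x a $ i \<le> 1" for x i
  proof -
    have nn: "\<forall>j. 0 \<le> fstar x a $ j" and s1: "(\<Sum>j\<in>UNIV. fstar x a $ j) = 1" using fsD[of x] by (auto simp: Delta_def)
    show "0 \<le> fstar x a $ i" using nn by simp
    show "fstar x a $ i \<le> 1" using s1 member_le_sum[of i UNIV "\<lambda>j. fstar x a $ j"] nn by simp
  qed
  have fsi: "(\<lambda>x. fstar x a $ i) \<in> borel_measurable borel" for i
    by (rule measurable_compose[OF fsm borel_measurable_nth])
  have Hmu: "(\<lambda>z. H (fst z) a i) \<in> borel_measurable \<mu>" for i
    by (rule measurable_compose[OF mu_fst Hm])
  have fsmu: "(\<lambda>z. fstar (fst z) a $ i) \<in> borel_measurable \<mu>" for i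
    by (rule measurable_compose[OF mu_fst fsi])
  have Ai: "(\<lambda>z. indicator {z. snd (snd z) = a \<and> fst (snd z) = i} z :: real) \<in> borel_measurable \<mu>" for i
    by measurable
  have Aa: "(\<lambda>z. indicator {z. snd (snd z) = a} z :: real) \<in> borel_measurable \<mu>"
    by measurable
  let ?phi = "\<lambda>x. (\<Sum>i\<in>UNIV. fstar x a $ i * (1 - H x a i))"
  have phim: "?phi \<in> borel_measurable borel"
    by (intro borel_measurable_sum borel_measurable_times borel_measurable_diff fsi Hm borel_measurable_const)
  have "(\<integral>z. indicator {z. snd (snd z) = a} z * (1 - H (fst z) a (fst (snd z))) \<partial>\<mu>)
      = (\<integral>z. (\<Sum>i\<in>UNIV. indicator {z. snd (snd z) = a \<and> fst (snd z) = i} z * (1 - H (fst z) a i)) \<partial>\<mu>)"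
    by (intro Bochner_Integration.integral_cong refl) (auto simp: indicator_def)
  also have "\<dots> = (\<Sum>i\<in>UNIV. \<integral>z. indicator {z. snd (snd z) = a \<and> fst (snd z) = i} z * (1 - H (fst z) a i) \<partial>\<mu>)"
  proof (rule Bochner_Integration.integral_sum)
    fix i
    show "integrable \<mu> (\<lambda>z. indicator {z. snd (snd z) = a \<and> fst (snd z) = i} z * (1 - H (fst z) a i))"
    proof (rule integrable_bdd[OF fmu _, of _ 1])
      show "(\<lambda>z. indicator {z. snd (snd z) = a \<and> fst (snd z) = i} z * (1 - H (fst z) a i)) \<in> borel_measurable \<mu>"
        by (intro borel_measurable_times borel_measurable_diff Ai Hmu borel_measurable_const)
      fix z :: "'x \<times> 'k \<times> 'g"
      show "\<bar>indicator {z. snd (snd z) = a \<and> fst (snd z) = i} z * (1 - H (fst z) a i)\<bar> \<le> 1"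
        using H0[of "fst z" i] H1[of "fst z" i] by (simp add: indicator_def)
    qed
  qed
  also have "\<dots> = (\<Sum>i\<in>UNIV. \<integral>z. indicator {z. snd (snd z) = a} z * (fstar (fst z) a $ i * (1 - H (fst z) a i)) \<partial>\<mu>)"
  proof (rule sum.cong[OF refl])
    fix i
    show "(\<integral>z. indicator {z. snd (snd z) = a \<and> fst (snd z) = i} z * (1 - H (fst z) a i) \<partial>\<mu>)
        = (\<integral>z. indicator {z. snd (snd z) = a} z * (fstar (fst z) a $ i * (1 - H (fst z) a i)) \<partial>\<mu>)"
      by (rule bayes_key[OF bayes, where \<phi>="\<lambda>x. 1 - H x a i" and B=1])
         (use H0 H1 in \<open>simp_all add: borel_measurable_diff Hm abs_le_iff\<close>)
  qed
  also have "\<dots> = (\<integral>z. (\<Sum>i\<in>UNIV. indicator {z. snd (snd z) = a} z * (fstar (fst z) a $ i * (1 - H (fst z) a i))) \<partial>\<mu>)"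
  proof (rule Bochner_Integration.integral_sum[symmetric])
    fix i
    show "integrable \<mu> (\<lambda>z. indicator {z. snd (snd z) = a} z * (fstar (fst z) a $ i * (1 - H (fst z) a i)))"
    proof (rule integrable_bdd[OF fmu _, of _ 1])
      show "(\<lambda>z. indicator {z. snd (snd z) = a} z * (fstar (fst z) a $ i * (1 - H (fst z) a i))) \<in> borel_measurable \<mu>"
        by (intro borel_measurable_times borel_measurable_diff Aa Hmu fsmu borel_measurable_const)
      fix z :: "'x \<times> 'k \<times> 'g"
      have "0 \<le> fstar (fst z) a $ i * (1 - H (fst z) a i)" using fs01[of "fst z" i] H1[of "fst z" i] by simp
      moreover have "fstar (fst z) a $ i * (1 - H (fst z) a i) \<le> 1"
        using fs01[of "fst z" i] H0[of "fst z" i] H1[of "fst z" i] by (intro mult_le_one) simp_all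
      ultimately show "\<bar>indicator {z. snd (snd z) = a} z * (fstar (fst z) a $ i * (1 - H (fst z) a i))\<bar> \<le> 1"
        by (simp add: indicator_def)
    qed
  qed
  also have "\<dots> = (\<integral>z. indicator {z. snd (snd z) = a} z * ?phi (fst z) \<partial>\<mu>)"
    by (simp add: sum_distrib_left)
  finally have num: "(\<integral>z. indicator {z. snd (snd z) = a} z * (1 - H (fst z) a (fst (snd z))) \<partial>\<mu>)
      = (\<integral>z. indicator {z. snd (snd z) = a} z * ?phi (fst z) \<partial>\<mu>)" .
  have "(\<integral>x. ?phi x \<partial>muX \<mu> a) = (\<integral>z. (indicator {z. snd (snd z) = a} z / probA \<mu> a) * ?phi (fst z) \<partial>\<mu>)"
    by (rule muX_integral[OF phim])
  also have "\<dots> = (\<integral>z. indicator {z. snd (snd z) = a} z * ?phi (fst z) / probA \<mu> a \<partial>\<mu>)"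
    by (simp add: field_simps)
  also have "\<dots> = (\<integral>z. indicator {z. snd (snd z) = a} z * ?phi (fst z) \<partial>\<mu>) / probA \<mu> a"
    by (rule integral_divide_zero)
  finally show ?thesis unfolding Err_def num by simp
qed

end


lemma kl1_bound:
  fixes \<kappa> :: "'k::finite \<Rightarrow> real"
  assumes knn: "\<And>j. 0 \<le> \<kappa> j" and ksum: "(\<Sum>j\<in>UNIV. \<kappa> j) = 1" and s: "s \<in> Delta"
  shows "0 \<le> (\<Sum>j\<in>UNIV. \<kappa> j * l1dist s (e j))" "(\<Sum>j\<in>UNIV. \<kappa> j * l1dist s (e j)) \<le> 2"
proof -
  show "0 \<le> (\<Sum>j\<in>UNIV. \<kappa> j * l1dist s (e j))" by (intro sum_nonneg mult_nonneg_nonneg knn l1dist_nonneg)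
  have "(\<Sum>j\<in>UNIV. \<kappa> j * l1dist s (e j)) \<le> (\<Sum>j\<in>UNIV. \<kappa> j * 2)"
    by (intro sum_mono mult_left_mono l1dist_e_le s knn)
  also have "\<dots> = 2" using ksum by (simp add: sum_distrib_right[symmetric])
  finally show "(\<Sum>j\<in>UNIV. \<kappa> j * l1dist s (e j)) \<le> 2" .
qed

lemma kl1_tri:
  fixes \<kappa> :: "'k::finite \<Rightarrow> real"
  assumes knn: "\<And>j. 0 \<le> \<kappa> j" and ksum: "(\<Sum>j\<in>UNIV. \<kappa> j) = 1"
  shows "(\<Sum>j\<in>UNIV. \<kappa> j * l1dist s (e j)) \<le> (\<Sum>j\<in>UNIV. \<kappa> j * l1dist t (e j)) + l1dist t s"
proof -
  have "(\<Sum>j\<in>UNIV. \<kappa> j * l1dist s (e j)) \<le> (\<Sum>j\<in>UNIV. \<kappa> j * (l1dist t (e j) + l1dist t s))"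
  proof (intro sum_mono mult_left_mono knn)
    fix j show "l1dist s (e j) \<le> l1dist t (e j) + l1dist t s"
      using l1dist_tri[of s "e j" t] l1dist_sym[of s t] by simp
  qed
  also have "\<dots> = (\<Sum>j\<in>UNIV. \<kappa> j * l1dist t (e j)) + (\<Sum>j\<in>UNIV. \<kappa> j) * l1dist t s"
    by (simp add: distrib_left sum.distrib sum_distrib_right)
  finally show ?thesis using ksum by simp
qed

lemma W1_le:
  fixes \<nu> :: "'x measure" and g :: "'x \<Rightarrow> real^'k::finite" and \<kappa> :: "'x \<Rightarrow> 'k \<Rightarrow> real"
  assumes nu: "prob_space \<nu>" and g: "g \<in> borel_measurable \<nu>" and gD: "\<And>x. g x \<in> Delta"
    and kmeas: "\<And>j. (\<lambda>x. \<kappa> x j) \<in> borel_measurable \<nu>"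
    and knn: "\<And>x j. 0 \<le> \<kappa> x j" and ksum: "\<And>x. (\<Sum>j\<in>UNIV. \<kappa> x j) = 1"
    and q: "q \<in> Qk"
    and marg: "\<And>j. (\<integral>\<^sup>+ x. ennreal (\<kappa> x j) \<partial>\<nu>) = emeasure q {e j}"
  shows "(INF \<gamma>\<in>couplings (distr \<nu> borel g) q. transport_cost \<gamma>) \<le> ennreal (\<integral>x. (\<Sum>j\<in>UNIV. \<kappa> x j * l1dist (g x) (e j)) \<partial>\<nu>)"
    and "W1 (distr \<nu> borel g) q \<le> (\<integral>x. (\<Sum>j\<in>UNIV. \<kappa> x j * l1dist (g x) (e j)) \<partial>\<nu>)"
proof -
  let ?F = "\<lambda>x. (\<Sum>j\<in>UNIV. \<kappa> x j * l1dist (g x) (e j))"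
  have Fm: "?F \<in> borel_measurable \<nu>"
    by (intro borel_measurable_sum borel_measurable_times kmeas l1dist_meas g borel_measurable_const)
  have F0: "0 \<le> ?F x" and F2: "?F x \<le> 2" for x using kl1_bound[OF knn ksum gD] by auto
  have int: "integrable \<nu> ?F"
    by (rule integrable_bdd[OF _ Fm, of 2]) (use nu F0 F2 in \<open>simp_all add: prob_space_def\<close>)
  have eq: "(\<integral>\<^sup>+ x. ennreal (?F x) \<partial>\<nu>) = ennreal (\<integral>x. ?F x \<partial>\<nu>)"
    by (rule nn_integral_eq_integral[OF int]) (simp add: F0)
  have "(INF \<gamma>\<in>couplings (distr \<nu> borel g) q. transport_cost \<gamma>) \<le> transport_cost (mkcoup \<nu> g \<kappa>)"
    by (rule INF_lower) (rule coupling_exists(1)[OF nu g kmeas knn ksum q marg])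
  also have "\<dots> = ennreal (\<integral>x. ?F x \<partial>\<nu>)"
    using coupling_exists(2)[OF nu g kmeas knn ksum q marg] eq by simp
  finally show I: "(INF \<gamma>\<in>couplings (distr \<nu> borel g) q. transport_cost \<gamma>) \<le> ennreal (\<integral>x. ?F x \<partial>\<nu>)" .
  have "W1 (distr \<nu> borel g) q \<le> enn2real (ennreal (\<integral>x. ?F x \<partial>\<nu>))"
    unfolding W1_def by (rule enn2real_mono[OF I]) simp
  also have "\<dots> = (\<integral>x. ?F x \<partial>\<nu>)" by (simp add: F0)
  finally show "W1 (distr \<nu> borel g) q \<le> (\<integral>x. ?F x \<partial>\<nu>)" .
qed


lemma markov_le1: assumes "markov_kernel_Y K" shows "K s j \<le> 1" "0 \<le> K s j"
proof -
  have nn: "\<And>j. 0 \<le> K s j" and s1: "(\<Sum>j\<in>UNIV. K s j) = 1" using assms by (auto simp: markov_kernel_Y_def)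
  show "K s j \<le> 1" using member_le_sum[of j UNIV "\<lambda>j. K s j"] nn s1 by simp
  show "0 \<le> K s j" by (rule nn)
qed

lemma disint_nn:
  fixes r q :: "(real^'k::finite) measure"
  assumes \<gamma>: "\<gamma> \<in> couplings r q" and dis: "disintegrates \<gamma> K" and S: "S \<in> sets borel"
  shows "emeasure \<gamma> (S \<times> {e j}) = (\<integral>\<^sup>+ s. ennreal (K s j) * indicator S s \<partial>r)"
proof -
  have r: "r = distr \<gamma> borel fst" and pg: "prob_space \<gamma>" and sg: "sets \<gamma> = sets (borel \<Otimes>\<^sub>M borel)"
    using \<gamma> by (auto simp: couplings_def)
  have mk: "markov_kernel_Y K" and eq: "measure \<gamma> (S \<times> {e j}) = (\<integral>s. indicator S s * K s j \<partial>r)"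
    using dis S r by (auto simp: disintegrates_def)
  have Km: "(\<lambda>s. K s j) \<in> borel_measurable borel" using mk by (simp add: markov_kernel_Y_def)
  have fstm: "fst \<in> measurable \<gamma> borel" by (subst measurable_cong_sets[OF sg refl]) simp
  have pr: "prob_space r" unfolding r by (rule prob_space.prob_space_distr[OF pg fstm])
  have sr: "sets r = sets borel" using r by simp
  have m: "(\<lambda>s. indicator S s * K s j) \<in> borel_measurable r"
    by (subst measurable_cong_sets[OF sr refl]) (intro borel_measurable_times borel_measurable_indicator Km S)
  have int: "integrable r (\<lambda>s. indicator S s * K s j)"
    by (rule integrable_bdd[OF _ m, of 1]) (use pr markov_le1[OF mk] in \<open>auto simp: prob_space_def indicator_def\<close>)
  have "emeasure \<gamma> (S \<times> {e j}) = ennreal (measure \<gamma> (S \<times> {e j}))"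
    using pg by (simp add: prob_space_def finite_measure.emeasure_eq_measure)
  also have "\<dots> = (\<integral>\<^sup>+ s. ennreal (indicator S s * K s j) \<partial>r)"
    unfolding eq by (rule nn_integral_eq_integral[symmetric, OF int]) (use markov_le1[OF mk] in simp)
  also have "\<dots> = (\<integral>\<^sup>+ s. ennreal (K s j) * indicator S s \<partial>r)"
    by (intro nn_integral_cong) (simp add: indicator_def)
  finally show ?thesis .
qed


lemma nn_real:
  assumes nu: "prob_space \<nu>" and G: "G \<in> borel_measurable \<nu>" and G0: "\<And>x. 0 \<le> G x" and GB: "\<And>x. G x \<le> B"
  shows "(\<integral>\<^sup>+x. ennreal (G x) \<partial>\<nu>) = ennreal (\<integral>x. G x \<partial>\<nu>)" "integrable \<nu> G" "0 \<le> (\<integral>x. G x \<partial>\<nu>)"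
proof -
  show int: "integrable \<nu> G"
    by (rule integrable_bdd[OF _ G, of B]) (use nu G0 GB in \<open>auto simp: prob_space_def abs_le_iff intro: order.trans[OF _ G0]\<close>)
  show "(\<integral>\<^sup>+x. ennreal (G x) \<partial>\<nu>) = ennreal (\<integral>x. G x \<partial>\<nu>)"
    by (rule nn_integral_eq_integral[OF int]) (simp add: G0)
  show "0 \<le> (\<integral>x. G x \<partial>\<nu>)" by (rule Bochner_Integration.integral_nonneg) (simp add: G0)
qed

lemma cost_pushf:
  fixes \<nu> :: "'x measure" and g :: "'x \<Rightarrow> real^'k::finite" and K' :: "real^'k \<Rightarrow> 'k \<Rightarrow> real"
  assumes nu: "prob_space \<nu>" and g: "g \<in> borel_measurable \<nu>" and gD: "\<And>x. g x \<in> Delta"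
    and Km: "\<And>j. (\<lambda>s. K' s j) \<in> borel_measurable borel" and Knn: "\<And>s j. 0 \<le> K' s j"
    and Ksum: "\<And>s. (\<Sum>j\<in>UNIV. K' s j) = 1"
  shows "(\<integral>\<^sup>+ s. (\<Sum>j\<in>UNIV. ennreal (K' s j) * ennreal (l1dist s (e j))) \<partial>distr \<nu> borel g)
      = ennreal (\<integral>x. (\<Sum>j\<in>UNIV. K' (g x) j * l1dist (g x) (e j)) \<partial>\<nu>)"
    and "(\<integral>\<^sup>+ s. ennreal (K' s j) \<partial>distr \<nu> borel g) = (\<integral>\<^sup>+ x. ennreal (K' (g x) j) \<partial>\<nu>)"
    and "0 \<le> (\<integral>x. (\<Sum>j\<in>UNIV. K' (g x) j * l1dist (g x) (e j)) \<partial>\<nu>)"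
proof -
  let ?F = "\<lambda>s. (\<Sum>j\<in>UNIV. K' s j * l1dist s (e j))"
  have Fm: "?F \<in> borel_measurable borel"
    by (intro borel_measurable_sum borel_measurable_times Km l1dist_meas borel_measurable_const) simp
  have "(\<integral>\<^sup>+ s. (\<Sum>j\<in>UNIV. ennreal (K' s j) * ennreal (l1dist s (e j))) \<partial>distr \<nu> borel g)
      = (\<integral>\<^sup>+ s. ennreal (?F s) \<partial>distr \<nu> borel g)"
    by (intro nn_integral_cong) (simp add: sum_ennreal[symmetric] ennreal_mult Knn l1dist_nonneg)
  also have "\<dots> = (\<integral>\<^sup>+ x. ennreal (?F (g x)) \<partial>\<nu>)"
    by (rule nn_integral_distr[OF g]) (simp add: measurable_compose[OF Fm measurable_ennreal])
  also have "\<dots> = ennreal (\<integral>x. ?F (g x) \<partial>\<nu>)"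
    by (rule nn_real(1)[OF nu measurable_compose[OF g Fm], of 2]) (use kl1_bound[OF Knn Ksum gD] in auto)
  finally show "(\<integral>\<^sup>+ s. (\<Sum>j\<in>UNIV. ennreal (K' s j) * ennreal (l1dist s (e j))) \<partial>distr \<nu> borel g)
      = ennreal (\<integral>x. ?F (g x) \<partial>\<nu>)" .
  show "0 \<le> (\<integral>x. ?F (g x) \<partial>\<nu>)"
    by (rule nn_real(3)[OF nu measurable_compose[OF g Fm], of 2]) (use kl1_bound[OF Knn Ksum gD] in auto)
  show "(\<integral>\<^sup>+ s. ennreal (K' s j) \<partial>distr \<nu> borel g) = (\<integral>\<^sup>+ x. ennreal (K' (g x) j) \<partial>\<nu>)"
    by (rule nn_integral_distr[OF g]) (simp add: measurable_compose[OF Km measurable_ennreal])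
qed

context
  fixes \<mu> :: "('x::polish_space \<times> 'k::finite \<times> 'g::finite) measure"
    and fstar ftil :: "'x \<Rightarrow> 'g \<Rightarrow> real^'k"
    and qt :: "(real^'k) measure"
    and \<gamma> :: "'g \<Rightarrow> ((real^'k) \<times> (real^'k)) measure"
    and K :: "'g \<Rightarrow> real^'k \<Rightarrow> 'k \<Rightarrow> real"
  assumes cp: "classification_problem \<mu>"
    and bayes: "bayes_regressor \<mu> fstar"
    and ftil_meas: "\<forall>a. (\<lambda>x. ftil x a) \<in> borel_measurable borel"
    and ftil_Delta: "\<forall>x a. ftil x a \<in> Delta"
    and qt_Q: "qt \<in> Qk"
    and \<gamma>_opt: "\<forall>a. optimal_coupling (pushf \<mu> ftil a) qt (\<gamma> a)"
    and K_dis: "\<forall>a. disintegrates (\<gamma> a) (K a)"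
begin

lemma mk: "markov_kernel_Y (K a)" using K_dis by (simp add: disintegrates_def)
lemma Kmeas: "(\<lambda>s. K a s j) \<in> borel_measurable borel" using mk by (simp add: markov_kernel_Y_def)
lemma Knn: "0 \<le> K a s j" using mk by (simp add: markov_kernel_Y_def)
lemma Ksum: "(\<Sum>j\<in>UNIV. K a s j) = 1" using mk by (simp add: markov_kernel_Y_def)
lemma fsm: "(\<lambda>x. fstar x a) \<in> borel_measurable borel" using bayes by (simp add: bayes_regressor_def)
lemma fsD: "fstar x a \<in> Delta" using bayes by (simp add: bayes_regressor_def)
lemma ftm: "(\<lambda>x. ftil x a) \<in> borel_measurable borel" using ftil_meas by simp
lemma ftD: "ftil x a \<in> Delta" using ftil_Delta by simp
lemma gcoup: "\<gamma> a \<in> couplings (pushf \<mu> ftil a) qt" using \<gamma>_opt by (simp add: optimal_coupling_def)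
lemma nu_sets: "sets (muX \<mu> a) = sets borel" by (rule muX_sets[OF cp])
lemma nu_prob: "prob_space (muX \<mu> a)" by (rule muX_prob[OF cp])
lemma nu_meas: "f \<in> borel_measurable borel \<Longrightarrow> f \<in> borel_measurable (muX \<mu> a)"
  by (simp add: measurable_cong_sets[OF nu_sets refl])
lemma KFm: "(\<lambda>x. K a (ftil x a) j) \<in> borel_measurable borel"
  by (rule measurable_compose[OF ftm Kmeas])

lemma grp_marg: "(\<integral>\<^sup>+ x. ennreal (K a (ftil x a) j) \<partial>muX \<mu> a) = emeasure qt {e j}"
proof -
  have "(\<integral>\<^sup>+ x. ennreal (K a (ftil x a) j) \<partial>muX \<mu> a) = (\<integral>\<^sup>+ s. ennreal (K a s j) \<partial>pushf \<mu> ftil a)"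
    unfolding pushf_def by (rule nn_integral_distr[symmetric]) (simp_all add: nu_meas ftm measurable_compose[OF Kmeas measurable_ennreal])
  also have "\<dots> = emeasure qt {e j}"
    by (rule cost_disint(2)[OF gcoup qt_Q Kmeas Knn disint_nn[OF gcoup K_dis[rule_format]]])
  finally show ?thesis .
qed

lemma grp_Err: "Err \<mu> (\<lambda>x a j. K a (ftil x a) j) a
   = (1/2) * (\<integral>x. (\<Sum>j\<in>UNIV. K a (ftil x a) j * l1dist (fstar x a) (e j)) \<partial>muX \<mu> a)"
proof -
  have "Err \<mu> (\<lambda>x a j. K a (ftil x a) j) a = (\<integral>x. (\<Sum>i\<in>UNIV. fstar x a $ i * (1 - K a (ftil x a) i)) \<partial>muX \<mu> a)"
    by (rule Err_formula[OF cp bayes]) (simp_all add: KFm Knn markov_le1[OF mk])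
  also have "\<dots> = (\<integral>x. (1/2) * (\<Sum>j\<in>UNIV. K a (ftil x a) j * l1dist (fstar x a) (e j)) \<partial>muX \<mu> a)"
  proof (rule Bochner_Integration.integral_cong[OF refl])
    fix x
    let ?s = "fstar x a" and ?k = "\<lambda>j. K a (ftil x a) j"
    have s1: "(\<Sum>i\<in>UNIV. ?s $ i) = 1" using fsD[of x a] by (simp add: Delta_def)
    have "(\<Sum>i\<in>UNIV. ?s $ i * (1 - ?k i)) = 1 - (\<Sum>i\<in>UNIV. ?k i * ?s $ i)"
      using s1 by (simp add: algebra_simps sum_subtractf)
    moreover have "(1/2) * (\<Sum>j\<in>UNIV. ?k j * l1dist ?s (e j)) = (\<Sum>j\<in>UNIV. ?k j * (1 - ?s $ j))"
      unfolding sum_distrib_left by (intro sum.cong refl) (simp add: l1dist_e[OF fsD] algebra_simps)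
    moreover have "(\<Sum>j\<in>UNIV. ?k j * (1 - ?s $ j)) = 1 - (\<Sum>i\<in>UNIV. ?k i * ?s $ i)"
      using Ksum[of a "ftil x a"] by (simp add: algebra_simps sum_subtractf)
    ultimately show "(\<Sum>i\<in>UNIV. ?s $ i * (1 - ?k i)) = (1/2) * (\<Sum>j\<in>UNIV. ?k j * l1dist ?s (e j))"
      by simp
  qed
  also have "\<dots> = (1/2) * (\<integral>x. (\<Sum>j\<in>UNIV. K a (ftil x a) j * l1dist (fstar x a) (e j)) \<partial>muX \<mu> a)"
    by (rule integral_mult_right_zero)
  finally show ?thesis .
qed

lemma grp_lower: "W1 (pushf \<mu> fstar a) qt \<le> (\<integral>x. (\<Sum>j\<in>UNIV. K a (ftil x a) j * l1dist (fstar x a) (e j)) \<partial>muX \<mu> a)"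
  unfolding pushf_def
  by (rule W1_le(2)[OF nu_prob nu_meas[OF fsm] fsD nu_meas[OF KFm] Knn Ksum qt_Q grp_marg])


lemma grp_T: "W1 (pushf \<mu> ftil a) qt = (\<integral>x. (\<Sum>j\<in>UNIV. K a (ftil x a) j * l1dist (ftil x a) (e j)) \<partial>muX \<mu> a)"
proof -
  have "transport_cost (\<gamma> a) = (INF \<gamma>'\<in>couplings (pushf \<mu> ftil a) qt. transport_cost \<gamma>')"
    using \<gamma>_opt by (simp add: optimal_coupling_def)
  then have "W1 (pushf \<mu> ftil a) qt = enn2real (transport_cost (\<gamma> a))" by (simp add: W1_def)
  also have "transport_cost (\<gamma> a) = (\<integral>\<^sup>+ s. (\<Sum>j\<in>UNIV. ennreal (K a s j) * ennreal (l1dist s (e j))) \<partial>pushf \<mu> ftil a)"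
    by (rule cost_disint(1)[OF gcoup qt_Q Kmeas Knn disint_nn[OF gcoup K_dis[rule_format]]])
  also have "\<dots> = ennreal (\<integral>x. (\<Sum>j\<in>UNIV. K a (ftil x a) j * l1dist (ftil x a) (e j)) \<partial>muX \<mu> a)"
    unfolding pushf_def by (rule cost_pushf(1)[OF nu_prob nu_meas[OF ftm] ftD Kmeas Knn Ksum])
  also have "enn2real \<dots> = (\<integral>x. (\<Sum>j\<in>UNIV. K a (ftil x a) j * l1dist (ftil x a) (e j)) \<partial>muX \<mu> a)"
    using cost_pushf(3)[OF nu_prob nu_meas[OF ftm] ftD Kmeas Knn Ksum] by simp
  finally show ?thesis .
qed

lemma kl_int:
  assumes Km: "\<And>j. (\<lambda>s. K' s j) \<in> borel_measurable borel" and Knn: "\<And>s j. 0 \<le> K' s j"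
    and Ksum: "\<And>s. (\<Sum>j\<in>UNIV. K' s j) = 1"
    and h: "h \<in> borel_measurable borel" and g: "g \<in> borel_measurable borel" and gD: "\<And>x. g x \<in> Delta"
  shows "integrable (muX \<mu> a) (\<lambda>x. (\<Sum>j\<in>UNIV. K' (h x) j * l1dist (g x) (e j)))"
proof -
  have m: "(\<lambda>x. (\<Sum>j\<in>UNIV. K' (h x) j * l1dist (g x) (e j))) \<in> borel_measurable borel"
    by (intro borel_measurable_sum borel_measurable_times measurable_compose[OF h Km] l1dist_meas g borel_measurable_const)
  show ?thesis
    by (rule nn_real(2)[OF nu_prob nu_meas[OF m], of 2]) (use kl1_bound[OF Knn Ksum gD] in auto)
qed

lemma E_int: "integrable (muX \<mu> a) (\<lambda>x. l1dist (ftil x a) (fstar x a))"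
proof -
  have m: "(\<lambda>x. l1dist (ftil x a) (fstar x a)) \<in> borel_measurable borel"
    by (intro l1dist_meas ftm fsm)
  show ?thesis
    by (rule nn_real(2)[OF nu_prob nu_meas[OF m], of 2]) (auto simp: l1dist_nonneg l1dist_Delta_le[OF ftD fsD])
qed

lemma grp_CTE: "(\<integral>x. (\<Sum>j\<in>UNIV. K a (ftil x a) j * l1dist (fstar x a) (e j)) \<partial>muX \<mu> a)
   \<le> (\<integral>x. (\<Sum>j\<in>UNIV. K a (ftil x a) j * l1dist (ftil x a) (e j)) \<partial>muX \<mu> a)
     + (\<integral>x. l1dist (ftil x a) (fstar x a) \<partial>muX \<mu> a)"
proof -
  have "(\<integral>x. (\<Sum>j\<in>UNIV. K a (ftil x a) j * l1dist (fstar x a) (e j)) \<partial>muX \<mu> a)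
      \<le> (\<integral>x. (\<Sum>j\<in>UNIV. K a (ftil x a) j * l1dist (ftil x a) (e j)) + l1dist (ftil x a) (fstar x a) \<partial>muX \<mu> a)"
    by (intro integral_mono Bochner_Integration.integrable_add kl_int Kmeas Knn Ksum ftm fsm fsD ftD E_int kl1_tri)
  also have "\<dots> = (\<integral>x. (\<Sum>j\<in>UNIV. K a (ftil x a) j * l1dist (ftil x a) (e j)) \<partial>muX \<mu> a)
     + (\<integral>x. l1dist (ftil x a) (fstar x a) \<partial>muX \<mu> a)"
    by (intro Bochner_Integration.integral_add kl_int Kmeas Knn Ksum ftm fsm fsD ftD E_int)
  finally show ?thesis .
qed


lemma grp_W:
  assumes q: "q \<in> Qk"
  shows "W1 (pushf \<mu> ftil a) q \<le> W1 (pushf \<mu> fstar a) q + (\<integral>x. l1dist (ftil x a) (fstar x a) \<partial>muX \<mu> a)"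
proof -
  let ?I = "INF \<gamma>'\<in>couplings (pushf \<mu> fstar a) q. transport_cost \<gamma>'"
  let ?E = "\<integral>x. l1dist (ftil x a) (fstar x a) \<partial>muX \<mu> a"
  have qp: "prob_space q" using q by (simp add: Qk_def)
  have qfin: "emeasure q {e j} = ennreal (measure q {e j})" for j
    using qp by (simp add: prob_space_def finite_measure.emeasure_eq_measure)
  have qsum: "(\<Sum>j\<in>UNIV. measure q {e j}) = 1"
  proof -
    have "ennreal (\<Sum>j\<in>UNIV. measure q {e j}) = 1"
      using Qk_sum1[OF q] by (simp add: qfin sum_ennreal)
    then show ?thesis by (simp add: sum_nonneg)
  qed
  have Ifin: "?I < \<top>"
  proof -
    have "?I \<le> ennreal (\<integral>x. (\<Sum>j\<in>UNIV. measure q {e j} * l1dist (fstar x a) (e j)) \<partial>muX \<mu> a)"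
      unfolding pushf_def
    proof (rule W1_le(1)[OF nu_prob nu_meas[OF fsm] fsD _ _ qsum q])
      fix j
      show "(\<integral>\<^sup>+ x. ennreal (measure q {e j}) \<partial>muX \<mu> a) = emeasure q {e j}"
        using prob_space.emeasure_space_1[OF nu_prob] by (simp add: qfin)
    qed simp_all
    also have "\<dots> < \<top>" by simp
    finally show ?thesis .
  qed
  have main: "ennreal (W1 (pushf \<mu> ftil a) q - ?E) \<le> ?I"
  proof (rule INF_greatest)
    fix \<gamma>' assume \<gamma>': "\<gamma>' \<in> couplings (pushf \<mu> fstar a) q"
    obtain K' where K'm: "\<And>j. (\<lambda>s. K' s j) \<in> borel_measurable borel" and K'nn: "\<And>s j. 0 \<le> K' s j"
      and K'sum: "\<And>s. (\<Sum>j\<in>UNIV. K' s j) = 1"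
      and K'dis: "\<And>S j. S \<in> sets borel \<Longrightarrow> emeasure \<gamma>' (S \<times> {e j}) = (\<integral>\<^sup>+ s. ennreal (K' s j) * indicator S s \<partial>pushf \<mu> fstar a)"
      using kernel_exists[OF \<gamma>' q] by blast
    have cost: "transport_cost \<gamma>' = ennreal (\<integral>x. (\<Sum>j\<in>UNIV. K' (fstar x a) j * l1dist (fstar x a) (e j)) \<partial>muX \<mu> a)"
      using cost_disint(1)[OF \<gamma>' q K'm K'nn K'dis] cost_pushf(1)[OF nu_prob nu_meas[OF fsm] fsD K'm K'nn K'sum]
      by (simp add: pushf_def)
    have marg: "(\<integral>\<^sup>+ x. ennreal (K' (fstar x a) j) \<partial>muX \<mu> a) = emeasure q {e j}" for j
      using cost_disint(2)[OF \<gamma>' q K'm K'nn K'dis] cost_pushf(2)[OF nu_prob nu_meas[OF fsm] fsD K'm K'nn K'sum]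
      by (simp add: pushf_def)
    have "W1 (pushf \<mu> ftil a) q \<le> (\<integral>x. (\<Sum>j\<in>UNIV. K' (fstar x a) j * l1dist (ftil x a) (e j)) \<partial>muX \<mu> a)"
      unfolding pushf_def
      by (rule W1_le(2)[OF nu_prob nu_meas[OF ftm] ftD nu_meas[OF measurable_compose[OF fsm K'm]] K'nn K'sum q marg])
    also have "\<dots> \<le> (\<integral>x. (\<Sum>j\<in>UNIV. K' (fstar x a) j * l1dist (fstar x a) (e j)) + l1dist (ftil x a) (fstar x a) \<partial>muX \<mu> a)"
    proof (intro integral_mono Bochner_Integration.integrable_add kl_int K'm K'nn K'sum ftm fsm fsD ftD E_int)
      fix x
      show "(\<Sum>j\<in>UNIV. K' (fstar x a) j * l1dist (ftil x a) (e j)) \<le> (\<Sum>j\<in>UNIV. K' (fstar x a) j * l1dist (fstar x a) (e j)) + l1dist (ftil x a) (fstar x a)"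
        using kl1_tri[of "\<lambda>j. K' (fstar x a) j" "ftil x a" "fstar x a", OF K'nn K'sum] l1dist_sym[of "fstar x a" "ftil x a"] by simp
    qed
    also have "\<dots> = (\<integral>x. (\<Sum>j\<in>UNIV. K' (fstar x a) j * l1dist (fstar x a) (e j)) \<partial>muX \<mu> a) + ?E"
      by (intro Bochner_Integration.integral_add kl_int K'm K'nn K'sum ftm fsm fsD ftD E_int)
    finally have "W1 (pushf \<mu> ftil a) q - ?E \<le> (\<integral>x. (\<Sum>j\<in>UNIV. K' (fstar x a) j * l1dist (fstar x a) (e j)) \<partial>muX \<mu> a)"
      by simp
    then show "ennreal (W1 (pushf \<mu> ftil a) q - ?E) \<le> transport_cost \<gamma>'"
      unfolding cost by (rule ennreal_leI)
  qed
  have "W1 (pushf \<mu> ftil a) q - ?E \<le> enn2real ?I"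
  proof (cases "W1 (pushf \<mu> ftil a) q - ?E \<le> 0")
    case True then show ?thesis using enn2real_nonneg[of ?I] by linarith
  next
    case False
    then have "W1 (pushf \<mu> ftil a) q - ?E = enn2real (ennreal (W1 (pushf \<mu> ftil a) q - ?E))" by simp
    also have "\<dots> \<le> enn2real ?I" by (rule enn2real_mono[OF main Ifin])
    finally show ?thesis .
  qed
  then show ?thesis by (simp add: W1_def)
qed


lemma main_result:
  assumes qt_min: "\<forall>q\<in>Qk. (\<Sum>a\<in>UNIV. W1 (pushf \<mu> ftil a) qt) \<le> (\<Sum>a\<in>UNIV. W1 (pushf \<mu> ftil a) q)"
  shows "0 \<le> (\<Sum>a\<in>UNIV. Err \<mu> (\<lambda>x a j. K a (ftil x a) j) a)
              - (1/2) * (INF q\<in>Qk. (\<Sum>a\<in>UNIV. W1 (pushf \<mu> fstar a) q))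
       \<and> (\<Sum>a\<in>UNIV. Err \<mu> (\<lambda>x a j. K a (ftil x a) j) a)
              - (1/2) * (INF q\<in>Qk. (\<Sum>a\<in>UNIV. W1 (pushf \<mu> fstar a) q))
         \<le> (\<Sum>a\<in>UNIV. \<integral>x. l1dist (ftil x a) (fstar x a) \<partial>(muX \<mu> a))"
proof -
  define C where "C a = (\<integral>x. (\<Sum>j\<in>UNIV. K a (ftil x a) j * l1dist (fstar x a) (e j)) \<partial>muX \<mu> a)" for a
  define T where "T a = (\<integral>x. (\<Sum>j\<in>UNIV. K a (ftil x a) j * l1dist (ftil x a) (e j)) \<partial>muX \<mu> a)" for a
  define E where "E a = (\<integral>x. l1dist (ftil x a) (fstar x a) \<partial>muX \<mu> a)" for a
  let ?f = "\<lambda>q. (\<Sum>a\<in>UNIV. W1 (pushf \<mu> fstar a) q)"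
  have sumErr: "(\<Sum>a\<in>UNIV. Err \<mu> (\<lambda>x a j. K a (ftil x a) j) a) = (1/2) * (\<Sum>a\<in>UNIV. C a)"
    by (simp add: grp_Err C_def sum_distrib_left)
  have W0: "0 \<le> W1 p q" for p q :: "(real^'k) measure" by (simp add: W1_def)
  have bdd: "bdd_below (?f ` Qk)"
  proof (rule bdd_belowI[of _ 0])
    fix y assume "y \<in> ?f ` Qk"
    then obtain q where "y = ?f q" by blast
    then show "0 \<le> y" by (simp add: sum_nonneg W0)
  qed
  have low: "(INF q\<in>Qk. ?f q) \<le> (\<Sum>a\<in>UNIV. C a)"
  proof -
    have "(INF q\<in>Qk. ?f q) \<le> ?f qt" by (rule cINF_lower[OF bdd qt_Q])
    also have "\<dots> \<le> (\<Sum>a\<in>UNIV. C a)" unfolding C_def by (intro sum_mono grp_lower)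
    finally show ?thesis .
  qed
  have up: "(\<Sum>a\<in>UNIV. C a) - 2 * (\<Sum>a\<in>UNIV. E a) \<le> (INF q\<in>Qk. ?f q)"
  proof (rule cINF_greatest)
    show "(Qk :: (real^'k) measure set) \<noteq> {}" using qt_Q by blast
    fix q :: "(real^'k) measure" assume q: "q \<in> Qk"
    have "(\<Sum>a\<in>UNIV. C a) \<le> (\<Sum>a\<in>UNIV. T a + E a)"
      unfolding C_def T_def E_def by (intro sum_mono grp_CTE)
    also have "\<dots> = (\<Sum>a\<in>UNIV. W1 (pushf \<mu> ftil a) qt) + (\<Sum>a\<in>UNIV. E a)"
      unfolding sum.distrib T_def grp_T ..
    also have "\<dots> \<le> (\<Sum>a\<in>UNIV. W1 (pushf \<mu> ftil a) q) + (\<Sum>a\<in>UNIV. E a)"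
      by (intro add_right_mono bspec[OF qt_min q])
    finally have c1: "(\<Sum>a\<in>UNIV. C a) \<le> (\<Sum>a\<in>UNIV. W1 (pushf \<mu> ftil a) q) + (\<Sum>a\<in>UNIV. E a)" .
    have "(\<Sum>a\<in>UNIV. W1 (pushf \<mu> ftil a) q) \<le> (\<Sum>a\<in>UNIV. W1 (pushf \<mu> fstar a) q + E a)"
      unfolding E_def by (intro sum_mono grp_W q)
    also have "\<dots> = ?f q + (\<Sum>a\<in>UNIV. E a)" by (rule sum.distrib)
    finally have c2: "(\<Sum>a\<in>UNIV. W1 (pushf \<mu> ftil a) q) \<le> ?f q + (\<Sum>a\<in>UNIV. E a)" .
    show "(\<Sum>a\<in>UNIV. C a) - 2 * (\<Sum>a\<in>UNIV. E a) \<le> ?f q" using c1 c2 by linarith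
  qed
  have S: "(\<Sum>a\<in>UNIV. \<integral>x. l1dist (ftil x a) (fstar x a) \<partial>(muX \<mu> a)) = (\<Sum>a\<in>UNIV. E a)"
    by (simp add: E_def)
  show ?thesis unfolding sumErr S using low up by linarith
qed

end

theorem theorem3p4:
  fixes \<mu> :: "('x::polish_space \<times> 'k::finite \<times> 'g::finite) measure"
    and fstar ftil :: "'x \<Rightarrow> 'g \<Rightarrow> real^'k"
    and qt :: "(real^'k) measure"
    and \<gamma> :: "'g \<Rightarrow> ((real^'k) \<times> (real^'k)) measure"
    and K :: "'g \<Rightarrow> real^'k \<Rightarrow> 'k \<Rightarrow> real"
  assumes k2: "CARD('k) \<ge> 2"
    and cp: "classification_problem \<mu>"
    and bayes: "bayes_regressor \<mu> fstar"
    and ftil_meas: "\<forall>a. (\<lambda>x. ftil x a) \<in> borel_measurable borel"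
    and ftil_Delta: "\<forall>x a. ftil x a \<in> Delta"
    and qt_Q: "qt \<in> Qk"
    and qt_min: "\<forall>q\<in>Qk. (\<Sum>a\<in>UNIV. W1 (pushf \<mu> ftil a) qt) \<le> (\<Sum>a\<in>UNIV. W1 (pushf \<mu> ftil a) q)"
    and \<gamma>_opt: "\<forall>a. optimal_coupling (pushf \<mu> ftil a) qt (\<gamma> a)"
    and K_dis: "\<forall>a. disintegrates (\<gamma> a) (K a)"
  shows "0 \<le> (\<Sum>a\<in>UNIV. Err \<mu> (\<lambda>x a j. K a (ftil x a) j) a)
              - (1/2) * (INF q\<in>Qk. (\<Sum>a\<in>UNIV. W1 (pushf \<mu> fstar a) q))
       \<and> (\<Sum>a\<in>UNIV. Err \<mu> (\<lambda>x a j. K a (ftil x a) j) a)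
              - (1/2) * (INF q\<in>Qk. (\<Sum>a\<in>UNIV. W1 (pushf \<mu> fstar a) q))
         \<le> (\<Sum>a\<in>UNIV. \<integral>x. l1dist (ftil x a) (fstar x a) \<partial>(muX \<mu> a))"
  using main_result[OF cp bayes ftil_meas ftil_Delta qt_Q \<gamma>_opt K_dis qt_min] by simp

end
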